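(* For $-2<\psi<2$ let $E_\psi$ be the complex elliptic curve $y^2=4x^3-12x+4\psi$, and let $\delta_2\in H_1(E_\psi,\Z)$ be the class of the compact connected component (oval) of $E_\psi\cap\R^2$, oriented so that $\int_{\delta_2}\frac{dx}{y}>0$. Then $$\int_{\delta_2}\frac{dx}{y}=\frac{\pi}{\sqrt3}F\Big(\frac16,\frac56,1\Big|\frac{\psi+2}4\Big),\qquad \int_{\delta_2}\frac{xdx}{y}=-\frac{\pi}{\sqrt3}F\Big(-\frac16,\frac76,1\Big|\frac{\psi+2}4\Big),$$ where $F(a,b,c|z)=\sum_{n\ge0}\frac{(a)_n(b)_n}{(c)_n\,n!}z^n$ is the Gauss hypergeometric function and $(a)_n=a(a+1)\cdots(a+n-1)$. *)

theory Defs
  imports "HOL-Analysis.Analysis"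
begin

definition hyperF :: "real \<Rightarrow> real \<Rightarrow> real \<Rightarrow> real \<Rightarrow> real" where
  "hyperF a b c z = (\<Sum>n. pochhammer a n * pochhammer b n / (pochhammer c n * fact n) * z ^ n)"

definition cubicE :: "real \<Rightarrow> real \<Rightarrow> real" where
  "cubicE \<psi> x = 4 * x ^ 3 - 12 * x + 4 * \<psi>"

end

theory Submission
  imports Defs
begin

definition cc :: "real \<Rightarrow> nat \<Rightarrow> real" where
  "cc a n = pochhammer ((1+a)/2) n * pochhammer ((1-a)/2) n / (pochhammer (1/2) n * fact n)"

definition pp :: "real \<Rightarrow> nat \<Rightarrow> real" where
  "pp a m = (if even m then cc a (m div 2) else 0)"

lemma cc_Suc: "cc a (Suc n) = cc a n * (((2*real n+1)^2 - a^2) / ((2*real n+1)*(2*real n+2)))"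
proof -
  have p: "pochhammer (1/2::real) n > 0" by (rule pochhammer_pos) simp
  have e1: "((1+a)/2 + real n) * ((1-a)/2 + real n) = ((2*real n+1)^2 - a^2)/4" by (simp add: field_simps power2_eq_square)
  have e2: "(1/2 + real n) * (real n+1) = ((2*real n+1)*(2*real n+2))/4" by (simp add: field_simps)
  have gen: "\<And>X Y::real. (X/4)/(Y/4) = X/Y" by simp
  have e: "((1+a)/2 + real n) * ((1-a)/2 + real n) / ((1/2 + real n) * (real n+1)) = ((2*real n+1)^2 - a^2) / ((2*real n+1)*(2*real n+2))"
    by (simp only: e1 e2 gen)
  have "cc a (Suc n) = cc a n * (((1+a)/2 + real n) * ((1-a)/2 + real n) / ((1/2 + real n) * (real n+1)))"
  proof -
    have g: "\<And>p1 x1 p2 y1 q1 u1 f1 w1::real. (p1 * x1) * (p2 * y1) / ((q1 * u1) * (w1 * f1)) = p1 * p2 / (q1 * f1) * (x1 * y1 / (u1 * w1))"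
      by (simp add: divide_inverse inverse_mult_distrib mult_ac)
    have f: "fact (Suc n) = (real n + 1) * fact n" by (simp add: fact_Suc)
    show ?thesis unfolding cc_def pochhammer_Suc f g by (simp add: mult_ac)
  qed
  then show ?thesis using e by (simp only:)
qed

lemma pp_rec: "pp a (Suc (Suc m)) = (((m+1)^2 - a^2) / ((m+2)*(m+1))) * pp a m"
proof (cases "even m")
  case True
  then obtain n where m: "m = 2*n" by blast
  have d: "Suc (Suc m) div 2 = Suc n" "m div 2 = n" "even (Suc (Suc m))" using m True by auto
  have r: "real m = 2 * real n" using m by simp
  show ?thesis unfolding pp_def using d True by (simp add: cc_Suc r add.commute mult.commute)
next
  case False then show ?thesis by (simp add: pp_def)
qed

lemma aux_ratio: fixes X r b :: real assumes "1 \<le> X" "0 \<le> b" "b \<le> 3" "1 \<le> r"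
  shows "\<bar>(X - b) / (X + r)\<bar> \<le> 1"
proof -
  have 1: "\<bar>X - b\<bar> \<le> X + r" using assms by (simp add: abs_le_iff)
  have 2: "X + r > 0" using assms by simp
  have "\<bar>(X - b) / (X + r)\<bar> = \<bar>X - b\<bar> / (X + r)" using 2 by simp
  also have "\<dots> \<le> 1" using 1 2 by simp
  finally show ?thesis .
qed

lemma pp_ratio_bound: assumes "a^2 \<le> 3"
  shows "\<bar>((real j+1)^2 - a^2) / ((real j+2)*(real j+1))\<bar> \<le> 1"
proof -
  have h: "(real j+2)*(real j+1) = (real j+1)^2 + (real j+1)" by (simp add: power2_eq_square algebra_simps)
  show ?thesis unfolding h by (rule aux_ratio) (use assms in auto)
qed

lemma pp_bound2: assumes "a^2 \<le> 3" shows "\<bar>pp a m\<bar> \<le> 1 \<and> \<bar>pp a (Suc m)\<bar> \<le> 1"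
proof (induction m)
  case 0 then show ?case by (simp add: pp_def cc_def)
next
  case (Suc j)
  have "\<bar>pp a (Suc (Suc j))\<bar> = \<bar>((real j+1)^2 - a^2) / ((real j+2)*(real j+1))\<bar> * \<bar>pp a j\<bar>"
    by (simp only: pp_rec abs_mult)
  also have "\<dots> \<le> 1 * 1" by (rule mult_mono) (use pp_ratio_bound[OF assms, of j] Suc in auto)
  finally show ?case using Suc by simp
qed

lemma pp_bound: assumes "a^2 \<le> 3" shows "\<bar>pp a m\<bar> \<le> 1"
  using pp_bound2[OF assms] by blast


definition PS :: "real \<Rightarrow> real \<Rightarrow> real" where "PS a w = (\<Sum>m. pp a m * w^m)"
definition PS1 :: "real \<Rightarrow> real \<Rightarrow> real" where "PS1 a w = (\<Sum>m. diffs (pp a) m * w^m)"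
definition PS2 :: "real \<Rightarrow> real \<Rightarrow> real" where "PS2 a w = (\<Sum>m. diffs (diffs (pp a)) m * w^m)"

lemma summ0: assumes "a^2 \<le> 3" "\<bar>w\<bar> < 1" shows "summable (\<lambda>m. pp a m * w^m)"
proof (rule summable_comparison_test)
  show "\<exists>N. \<forall>n\<ge>N. norm (pp a n * w ^ n) \<le> \<bar>w\<bar>^n"
  proof (intro exI allI impI)
    fix n :: nat
    have "norm (pp a n * w ^ n) = \<bar>pp a n\<bar> * \<bar>w\<bar>^n" by (simp add: abs_mult power_abs)
    also have "\<dots> \<le> 1 * \<bar>w\<bar>^n" by (rule mult_right_mono) (use pp_bound[OF assms(1)] in auto)
    finally show "norm (pp a n * w ^ n) \<le> \<bar>w\<bar>^n" by simp
  qed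
  show "summable (\<lambda>n. \<bar>w\<bar>^n)" using assms(2) by (simp add: summable_geometric)
qed

lemma summ1: assumes "a^2 \<le> 3" "\<bar>w\<bar> < 1" shows "summable (\<lambda>m. diffs (pp a) m * w^m)"
  by (rule termdiff_converges[where K=1]) (use assms summ0 in auto)

lemma summ2: assumes "a^2 \<le> 3" "\<bar>w\<bar> < 1" shows "summable (\<lambda>m. diffs (diffs (pp a)) m * w^m)"
  by (rule termdiff_converges[where K=1]) (use assms summ1 in auto)

lemma dPS: assumes "a^2 \<le> 3" "\<bar>w\<bar> < 1" shows "(PS a has_real_derivative PS1 a w) (at w)"
  unfolding PS_def PS1_def by (rule termdiffs_strong'[where K=1]) (use assms summ0 in auto)

lemma dPS1: assumes "a^2 \<le> 3" "\<bar>w\<bar> < 1" shows "(PS1 a has_real_derivative PS2 a w) (at w)"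
  unfolding PS1_def PS2_def by (rule termdiffs_strong'[where K=1]) (use assms summ1 in auto)

lemma PS_ode: assumes "a^2 \<le> 3" "\<bar>w\<bar> < 1"
  shows "(1 - w^2) * PS2 a w - 3 * w * PS1 a w + (a^2 - 1) * PS a w = 0"
proof -
  note S0 = summable_sums[OF summ0[OF assms], folded PS_def]
  note S1 = summable_sums[OF summ1[OF assms], folded PS1_def]
  note S2 = summable_sums[OF summ2[OF assms], folded PS2_def]
  have T1: "(\<lambda>m. real m * pp a m * w^m) sums (w * PS1 a w)"
  proof -
    have "(\<lambda>m. w * (diffs (pp a) m * w^m)) sums (w * PS1 a w)" by (rule sums_mult[OF S1])
    moreover have "(\<lambda>m. w * (diffs (pp a) m * w^m)) = (\<lambda>m. real (Suc m) * pp a (Suc m) * w^(Suc m))"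
      by (auto simp: diffs_def)
    ultimately have "(\<lambda>m. real (Suc m) * pp a (Suc m) * w^(Suc m)) sums (w * PS1 a w)" by simp
    then show ?thesis by (subst (asm) sums_Suc_iff) simp
  qed
  have T2: "(\<lambda>m. real m * (real m - 1) * pp a m * w^m) sums (w^2 * PS2 a w)"
  proof -
    have "(\<lambda>m. w^2 * (diffs (diffs (pp a)) m * w^m)) sums (w^2 * PS2 a w)" by (rule sums_mult[OF S2])
    moreover have "(\<lambda>m. w^2 * (diffs (diffs (pp a)) m * w^m)) =
       (\<lambda>m. real (Suc (Suc m)) * (real (Suc (Suc m)) - 1) * pp a (Suc (Suc m)) * w^(Suc (Suc m)))"
      by (auto simp: diffs_def algebra_simps power2_eq_square)
    ultimately have "(\<lambda>m. real (Suc (Suc m)) * (real (Suc (Suc m)) - 1) * pp a (Suc (Suc m)) * w^(Suc (Suc m))) sums (w^2 * PS2 a w)" by simp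
    then have "(\<lambda>m. real (Suc m) * (real (Suc m) - 1) * pp a (Suc m) * w^(Suc m)) sums (w^2 * PS2 a w)"
      by (subst (asm) sums_Suc_iff[where f="\<lambda>m. real (Suc m) * (real (Suc m) - 1) * pp a (Suc m) * w^(Suc m)"]) simp
    then show ?thesis by (subst (asm) sums_Suc_iff) simp
  qed
  have T3: "(\<lambda>m. ((real m + 1)^2 - a^2) * pp a m * w^m) sums PS2 a w"
  proof -
    have "(\<lambda>m. diffs (diffs (pp a)) m * w^m) = (\<lambda>m. ((real m + 1)^2 - a^2) * pp a m * w^m)"
    proof
      fix m
      have "diffs (diffs (pp a)) m = (real m + 1) * (real m + 2) * pp a (Suc (Suc m))"
        by (simp add: diffs_def algebra_simps)
      also have "\<dots> = ((real m + 1)^2 - a^2) * pp a m"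
        by (simp add: pp_rec)
      finally show "diffs (diffs (pp a)) m * w^m = ((real m + 1)^2 - a^2) * pp a m * w^m" by simp
    qed
    then show ?thesis using S2 by simp
  qed
  have "(\<lambda>m. ((real m + 1)^2 - a^2) * pp a m * w^m - real m * (real m - 1) * pp a m * w^m
       - 3 * (real m * pp a m * w^m) + (a^2 - 1) * (pp a m * w^m))
       sums (PS2 a w - w^2 * PS2 a w - 3 * (w * PS1 a w) + (a^2 - 1) * PS a w)"
    by (intro sums_add sums_diff sums_mult T1 T2 T3 S0)
  moreover have "(\<lambda>m. ((real m + 1)^2 - a^2) * pp a m * w^m - real m * (real m - 1) * pp a m * w^m
       - 3 * (real m * pp a m * w^m) + (a^2 - 1) * (pp a m * w^m)) = (\<lambda>m. 0)"
    by (auto simp: algebra_simps power2_eq_square)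
  ultimately have "(\<lambda>m. 0::real) sums (PS2 a w - w^2 * PS2 a w - 3 * (w * PS1 a w) + (a^2 - 1) * PS a w)" by simp
  then have "PS2 a w - w^2 * PS2 a w - 3 * (w * PS1 a w) + (a^2 - 1) * PS a w = 0"
    using sums_unique2 sums_zero by blast
  then show ?thesis by (simp add: algebra_simps)
qed


lemma sin_abs_lt1: assumes "\<bar>t\<bar> < pi/2" shows "\<bar>sin t\<bar> < 1"
proof -
  have "cos t > 0" using assms by (intro cos_gt_zero_pi) auto
  moreover have "sin t ^ 2 + cos t ^ 2 = 1" by simp
  ultimately have "sin t ^ 2 < 1" by (smt (verit) zero_less_power)
  then show ?thesis by (simp add: abs_square_less_1)
qed

lemma PS_cos: assumes a: "a^2 \<le> 3" "a \<noteq> 0" and t: "\<bar>t\<bar> < pi/2"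
  shows "cos (a * t) = PS a (sin t) * cos t"
proof -
  define D where "D t = PS a (sin t) * cos t - cos (a * t)" for t
  define D1 where "D1 t = PS1 a (sin t) * (cos t)^2 - PS a (sin t) * sin t + a * sin (a * t)" for t
  define E where "E t = (D1 t)^2 + a^2 * (D t)^2" for t
  let ?S = "{-pi/2<..<pi/2}"
  have hs: "\<And>t. t \<in> ?S \<Longrightarrow> \<bar>sin t\<bar> < 1" by (rule sin_abs_lt1) auto
  have dS: "((\<lambda>t. PS a (sin t)) has_real_derivative PS1 a (sin t) * cos t) (at t)" if "t \<in> ?S" for t
    by (rule DERIV_chain2[OF dPS[OF a(1) hs[OF that]] DERIV_sin])
  have dS1: "((\<lambda>t. PS1 a (sin t)) has_real_derivative PS2 a (sin t) * cos t) (at t)" if "t \<in> ?S" for t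
    by (rule DERIV_chain2[OF dPS1[OF a(1) hs[OF that]] DERIV_sin])
  have dD: "(D has_real_derivative D1 t) (at t)" if "t \<in> ?S" for t
    unfolding D_def[abs_def] D1_def
    by (rule derivative_eq_intros dS[OF that] refl | simp)+ (simp add: power2_eq_square algebra_simps)
  have dD1: "(D1 has_real_derivative (-(a^2 * D t))) (at t)" if "t \<in> ?S" for t
  proof -
    have ode: "(1 - (sin t)^2) * PS2 a (sin t) - 3 * sin t * PS1 a (sin t) + (a^2 - 1) * PS a (sin t) = 0"
      by (rule PS_ode[OF a(1) hs[OF that]])
    have c: "(cos t)^2 = 1 - (sin t)^2" by (simp add: cos_squared_eq)
    have "(D1 has_real_derivative
        PS2 a (sin t) * cos t * (cos t)^2 + PS1 a (sin t) * (2 * cos t * (- sin t))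
        - (PS1 a (sin t) * cos t * sin t + PS a (sin t) * cos t) + a * (a * cos (a * t))) (at t)"
      unfolding D1_def[abs_def]
      by (rule derivative_eq_intros dS[OF that] dS1[OF that] refl | simp)+
    moreover have "PS2 a (sin t) * cos t * (cos t)^2 + PS1 a (sin t) * (2 * cos t * (- sin t))
        - (PS1 a (sin t) * cos t * sin t + PS a (sin t) * cos t) + a * (a * cos (a * t)) = -(a^2 * D t)"
    proof -
      have "PS2 a (sin t) * (cos t)^2 = 3 * sin t * PS1 a (sin t) - (a^2 - 1) * PS a (sin t)"
        unfolding c using ode by (simp add: algebra_simps)
      then have "cos t * (PS2 a (sin t) * (cos t)^2) = cos t * (3 * sin t * PS1 a (sin t) - (a^2 - 1) * PS a (sin t))" by simp
      then show ?thesis unfolding D_def by (simp add: algebra_simps power2_eq_square)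
    qed
    ultimately show ?thesis by simp
  qed
  have dE: "(E has_real_derivative 0) (at t within ?S)" if "t \<in> ?S" for t
  proof -
    have "(E has_real_derivative (2 * D1 t * (-(a^2 * D t)) + a^2 * (2 * D t * D1 t))) (at t)"
      unfolding E_def[abs_def]
      by (rule derivative_eq_intros dD[OF that] dD1[OF that] refl | simp)+
    then show ?thesis by (auto intro: has_field_derivative_at_within simp: algebra_simps)
  qed
  obtain c where c: "\<And>x. x \<in> ?S \<Longrightarrow> E x = c"
    using has_field_derivative_zero_constant[of ?S E] dE by (metis convex_real_interval(8))
  have "PS a 0 = 1"
    unfolding PS_def using powser_zero[of "pp a"] by (simp add: pp_def cc_def)
  moreover have "PS1 a 0 = 0"
    unfolding PS1_def using powser_zero[of "diffs (pp a)"] by (simp add: diffs_def pp_def)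
  ultimately have "E 0 = 0" by (simp add: E_def D_def D1_def)
  moreover have "t \<in> ?S" "0 \<in> ?S" using t by auto
  ultimately have "E t = 0" using c by metis
  then have "a^2 * (D t)^2 = 0" unfolding E_def by (smt (verit) zero_le_power2 mult_nonneg_nonneg)
  then have "D t = 0" using a(2) by simp
  then show ?thesis unfolding D_def by simp
qed


lemma PS_arcsin: assumes a: "a^2 \<le> 3" "a \<noteq> 0" and w: "\<bar>w\<bar> < 1"
  shows "cos (a * arcsin w) / sqrt (1 - w^2) = PS a w"
proof -
  have b: "- (pi/2) < arcsin w \<and> arcsin w < pi/2" using w by (intro arcsin_lt_bounded) auto
  have "cos (a * arcsin w) = PS a (sin (arcsin w)) * cos (arcsin w)"
    by (rule PS_cos[OF a]) (use b in auto)
  moreover have "sin (arcsin w) = w" using w by simp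
  moreover have "cos (arcsin w) = sqrt (1 - w^2)" using w by (intro cos_arcsin) auto
  moreover have "sqrt (1 - w^2) > 0" using w by (simp add: abs_square_less_1)
  ultimately show ?thesis by simp
qed

fun Wl :: "nat \<Rightarrow> real" where
  "Wl 0 = pi" | "Wl (Suc 0) = 0" | "Wl (Suc (Suc n)) = (real n + 1) / (real n + 2) * Wl n"

lemma wallis_int: "((\<lambda>t. sin t ^ n) has_integral Wl n) {-pi/2..pi/2}"
proof (induction n rule: Wl.induct)
  case 1
  then show ?case using has_integral_const_real[of "1::real" "-pi/2" "pi/2"] by simp
next
  case 2
  have "((\<lambda>t. sin t) has_integral (-cos (pi/2) - (- cos (-pi/2)))) {-pi/2..pi/2}"
  proof (rule fundamental_theorem_of_calculus)
    fix x :: real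
    have "((\<lambda>t. - cos t) has_real_derivative sin x) (at x)" by (auto intro!: derivative_eq_intros)
    then show "((\<lambda>t. - cos t) has_vector_derivative sin x) (at x within {-pi/2..pi/2})"
      by (simp add: has_real_derivative_iff_has_vector_derivative has_vector_derivative_at_within)
  qed simp
  then show ?case by simp
next
  case (3 n)
  let ?G = "\<lambda>t. - (sin t ^ Suc n * cos t)"
  have F: "((\<lambda>t. (real n + 2) * sin t ^ Suc (Suc n) - (real n + 1) * sin t ^ n) has_integral (?G (pi/2) - ?G (-pi/2))) {-pi/2..pi/2}"
  proof (rule fundamental_theorem_of_calculus)
    fix x :: real
    have "(?G has_real_derivative (real n + 2) * sin x ^ Suc (Suc n) - (real n + 1) * sin x ^ n) (at x)"
    proof -
      have d1: "((\<lambda>t. sin t ^ Suc n) has_real_derivative (real (Suc n) * sin x ^ n) * cos x) (at x)"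
        using DERIV_chain2[OF DERIV_pow[of "Suc n" "sin x"] DERIV_sin[of x]] by simp
      have "(?G has_real_derivative -(real (Suc n) * sin x ^ n * (cos x * cos x) + sin x ^ Suc n * (- sin x))) (at x)"
        using DERIV_minus[OF DERIV_mult[OF d1 DERIV_cos[of x]]] by (simp add: mult_ac)
      moreover have "-(real (Suc n) * sin x ^ n * (cos x * cos x) + sin x ^ Suc n * (- sin x)) = (real n + 2) * sin x ^ Suc (Suc n) - (real n + 1) * sin x ^ n"
      proof -
        have cx: "cos x * cos x = 1 - sin x * sin x" using sin_cos_squared_add[of x] by (simp add: power2_eq_square)
        show ?thesis unfolding cx by (simp add: algebra_simps)
      qed
      ultimately show ?thesis by simp
    qed
    then show "(?G has_vector_derivative (real n + 2) * sin x ^ Suc (Suc n) - (real n + 1) * sin x ^ n) (at x within {-pi/2..pi/2})"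
      by (simp add: has_real_derivative_iff_has_vector_derivative has_vector_derivative_at_within)
  qed simp
  have G0: "?G (pi/2) - ?G (-pi/2) = 0" by simp
  have H: "((\<lambda>t. (real n + 1) * sin t ^ n) has_integral ((real n + 1) * Wl n)) {-pi/2..pi/2}"
    using has_integral_mult_right[OF 3] by simp
  have "((\<lambda>t. ((real n + 2) * sin t ^ Suc (Suc n) - (real n + 1) * sin t ^ n) + (real n + 1) * sin t ^ n) has_integral (0 + (real n + 1) * Wl n)) {-pi/2..pi/2}"
    by (rule has_integral_add[OF F[unfolded G0] H])
  then have "((\<lambda>t. (real n + 2) * sin t ^ Suc (Suc n)) has_integral ((real n + 1) * Wl n)) {-pi/2..pi/2}" by simp
  then have "((\<lambda>t. (1 / (real n + 2)) * ((real n + 2) * sin t ^ Suc (Suc n))) has_integral (1 / (real n + 2)) * ((real n + 1) * Wl n)) {-pi/2..pi/2}"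
    by (rule has_integral_mult_right)
  moreover have "(\<lambda>t. (1 / (real n + 2)) * ((real n + 2) * sin t ^ Suc (Suc n))) = (\<lambda>t. sin t ^ Suc (Suc n))"
    by auto
  ultimately show ?case by simp
qed

lemma Wl_odd: "Wl (Suc (2*n)) = 0"
  by (induction n) (auto simp: numeral_2_eq_2)

lemma Wl_even: "Wl (2*n) = pi * pochhammer (1/2) n / fact n"
proof (induction n)
  case 0 then show ?case by simp
next
  case (Suc n)
  have "Wl (2 * Suc n) = (2 * real n + 1) / (2 * real n + 2) * Wl (2*n)"
    by (simp add: numeral_2_eq_2)
  also have "\<dots> = pi * pochhammer (1/2) (Suc n) / fact (Suc n)"
    unfolding Suc pochhammer_Suc by (simp add: field_simps)
  finally show ?case .
qed


lemma PS_integral: assumes a: "a^2 \<le> 3" and s: "0 \<le> s" "s < 1"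
  shows "\<exists>J. (\<lambda>m. pp a m * s^m * Wl m) sums J \<and> ((\<lambda>t. PS a (s * sin t)) has_integral J) {-pi/2..pi/2}"
proof -
  let ?F = "\<lambda>i t. pp a i * (s * sin t)^i"
  have u: "uniform_limit {-pi/2..pi/2} (\<lambda>n t. \<Sum>i<n. ?F i t) (\<lambda>t. suminf (\<lambda>i. ?F i t)) sequentially"
  proof (rule Weierstrass_m_test)
    fix n :: nat and t :: real
    have "norm (?F n t) = \<bar>pp a n\<bar> * (s * \<bar>sin t\<bar>)^n" using s by (simp add: abs_mult power_abs)
    also have "\<dots> \<le> 1 * s^n"
    proof (rule mult_mono)
      show "(s * \<bar>sin t\<bar>)^n \<le> s^n" using s by (intro power_mono) (auto intro: mult_left_le)
    qed (use pp_bound[OF a] s in auto)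
    finally show "norm (?F n t) \<le> s^n" by simp
  next
    show "summable (\<lambda>n. s^n)" using s by (simp add: summable_geometric)
  qed
  have c: "\<And>n. continuous_on {-pi/2..pi/2} (\<lambda>t. \<Sum>i<n. ?F i t)" by (intro continuous_intros)
  obtain I J where I: "\<And>n. ((\<lambda>t. \<Sum>i<n. ?F i t) has_integral I n) {-pi/2..pi/2}"
    and J: "((\<lambda>t. suminf (\<lambda>i. ?F i t)) has_integral J) {-pi/2..pi/2}" and lim: "I \<longlonglongrightarrow> J"
    using uniform_limit_integral[OF u c] by auto
  have I2: "((\<lambda>t. \<Sum>i<n. ?F i t) has_integral (\<Sum>i<n. pp a i * s^i * Wl i)) {-pi/2..pi/2}" for n
  proof (rule has_integral_sum)
    fix i
    have "((\<lambda>t. (pp a i * s^i) * sin t ^ i) has_integral (pp a i * s^i) * Wl i) {-pi/2..pi/2}"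
      by (rule has_integral_mult_right[OF wallis_int])
    then show "((\<lambda>t. ?F i t) has_integral pp a i * s^i * Wl i) {-pi/2..pi/2}"
      by (simp add: power_mult_distrib mult_ac)
  qed simp
  have "I n = (\<Sum>i<n. pp a i * s^i * Wl i)" for n using has_integral_unique[OF I I2] .
  then have "I = (\<lambda>n. \<Sum>i<n. pp a i * s^i * Wl i)" by (rule ext)
  then have "(\<lambda>m. pp a m * s^m * Wl m) sums J" using lim unfolding sums_def by simp
  moreover have "(\<lambda>t. suminf (\<lambda>i. ?F i t)) = (\<lambda>t. PS a (s * sin t))" by (simp add: PS_def)
  ultimately show ?thesis using J by auto
qed


lemma theta_int: assumes a: "a^2 \<le> 3" "a \<noteq> 0" and z: "0 \<le> z" "z < 1"
  shows "((\<lambda>t. cos (a * arcsin (sqrt z * sin t)) / sqrt (1 - (sqrt z * sin t)^2)) has_integral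
           (pi * hyperF ((1-a)/2) ((1+a)/2) 1 z)) {-pi/2..pi/2}"
proof -
  define s where "s = sqrt z"
  have s: "0 \<le> s" "s < 1" using z by (auto simp: s_def real_sqrt_lt_1_iff)
  obtain J where JS: "(\<lambda>m. pp a m * s^m * Wl m) sums J"
    and JI: "((\<lambda>t. PS a (s * sin t)) has_integral J) {-pi/2..pi/2}"
    using PS_integral[OF a(1) s] by blast
  have "(\<lambda>n. pp a (2*n) * s^(2*n) * Wl (2*n)) sums J"
  proof (subst sums_mono_reindex)
    show "strict_mono (\<lambda>n::nat. 2*n)" by (rule strict_monoI) simp
    show "pp a n * s^n * Wl n = 0" if "n \<notin> range (\<lambda>n::nat. 2*n)" for n
    proof -
      have "odd n" using that by (metis evenE rangeI)
      then show ?thesis by (simp add: pp_def)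
    qed
  qed (rule JS)
  moreover have "pp a (2*n) * s^(2*n) * Wl (2*n) = pi * (pochhammer ((1-a)/2) n * pochhammer ((1+a)/2) n /
      (pochhammer 1 n * fact n) * z^n)" for n
  proof -
    have sz: "s^(2*n) = z^n" using z by (simp add: s_def power_mult)
    have p0: "pochhammer (1/2::real) n \<noteq> 0" by (simp add: pochhammer_eq_0_iff)
    have pp2: "pp a (2*n) = cc a n" by (simp add: pp_def)
    show ?thesis unfolding sz Wl_even pp2 cc_def pochhammer_fact[symmetric]
      using p0 by (simp add: field_simps)
  qed
  ultimately have "(\<lambda>n. pi * (pochhammer ((1-a)/2) n * pochhammer ((1+a)/2) n /
      (pochhammer 1 n * fact n) * z^n)) sums J" by simp
  then have "(\<lambda>n. (1/pi) * (pi * (pochhammer ((1-a)/2) n * pochhammer ((1+a)/2) n /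
      (pochhammer 1 n * fact n) * z^n))) sums ((1/pi) * J)" by (rule sums_mult)
  then have "(\<lambda>n. pochhammer ((1-a)/2) n * pochhammer ((1+a)/2) n /
      (pochhammer 1 n * fact n) * z^n) sums (J / pi)" by simp
  then have "hyperF ((1-a)/2) ((1+a)/2) 1 z = J / pi" unfolding hyperF_def by (rule sums_unique[symmetric])
  then have JJ: "J = pi * hyperF ((1-a)/2) ((1+a)/2) 1 z" by simp
  have "((\<lambda>t. cos (a * arcsin (s * sin t)) / sqrt (1 - (s * sin t)^2)) has_integral J) {-pi/2..pi/2}"
  proof (rule has_integral_cong[THEN iffD1, OF _ JI])
    fix t
    have "\<bar>s * sin t\<bar> < 1"
    proof -
      have "\<bar>s * sin t\<bar> = s * \<bar>sin t\<bar>" using s by (simp add: abs_mult)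
      also have "\<dots> \<le> s * 1" using s by (intro mult_left_mono) auto
      finally show ?thesis using s by simp
    qed
    then show "PS a (s * sin t) = cos (a * arcsin (s * sin t)) / sqrt (1 - (s * sin t)^2)"
      using PS_arcsin[OF a] by simp
  qed
  then show ?thesis unfolding JJ s_def .
qed



definition sf :: "real \<Rightarrow> real" where "sf \<psi> = sqrt ((\<psi> + 2) / 4)"
definition betaf :: "real \<Rightarrow> real \<Rightarrow> real" where "betaf \<psi> t = 2/3 * arcsin (sf \<psi> * sin t)"
definition Yf :: "real \<Rightarrow> real \<Rightarrow> real" where "Yf \<psi> t = -2 * cos (pi/3 + betaf \<psi> t)"
definition Ydf :: "real \<Rightarrow> real \<Rightarrow> real" where
  "Ydf \<psi> t = 2 * sin (pi/3 + betaf \<psi> t) * (2/3 * (sf \<psi> * cos t) / sqrt (1 - (sf \<psi> * sin t)^2))"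
definition H1f :: "real \<Rightarrow> real \<Rightarrow> real" where
  "H1f \<psi> t = 2/3 * sin (pi/3 + betaf \<psi> t) / sqrt (1 - (sf \<psi> * sin t)^2)"

context
  fixes \<psi> :: real
  assumes psi: "-2 < \<psi>" "\<psi> < 2"
begin

lemma sf_bounds: "0 < sf \<psi>" "sf \<psi> < 1"
  using psi by (auto simp: sf_def real_sqrt_lt_1_iff)

lemma sf_sq: "(sf \<psi>)^2 = (\<psi> + 2) / 4"
  using psi by (simp add: sf_def)

lemma w_bound: "\<bar>sf \<psi> * sin t\<bar> < 1"
proof -
  have "\<bar>sf \<psi> * sin t\<bar> = sf \<psi> * \<bar>sin t\<bar>" using sf_bounds by (simp add: abs_mult)
  also have "\<dots> \<le> sf \<psi> * 1" using sf_bounds by (intro mult_left_mono) auto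
  finally show ?thesis using sf_bounds by simp
qed

lemma sqrt_w_pos: "sqrt (1 - (sf \<psi> * sin t)^2) > 0"
  using w_bound[of t] by (simp add: abs_square_less_1)

lemma beta_bound: "\<bar>betaf \<psi> t\<bar> < pi/3"
proof -
  have "- (pi/2) < arcsin (sf \<psi> * sin t) \<and> arcsin (sf \<psi> * sin t) < pi/2"
    using w_bound[of t] by (intro arcsin_lt_bounded) auto
  then show ?thesis unfolding betaf_def by auto
qed

lemma cubic_Y: "cubicE \<psi> (Yf \<psi> t) = 16 * (sf \<psi>)^2 * (cos t)^2"
proof -
  define w where "w = sf \<psi> * sin t"
  define v where "v = pi/3 + betaf \<psi> t"
  have w1: "-1 \<le> w" "w \<le> 1" using w_bound[of t] by (auto simp: w_def)
  have "3 * v = 2 * arcsin w + pi" by (simp add: v_def betaf_def w_def algebra_simps)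
  then have "cos (3 * v) = - cos (2 * arcsin w)" by simp
  also have "\<dots> = - (1 - 2 * w^2)" unfolding cos_double_sin using w1 by simp
  finally have c3: "4 * cos v ^ 3 - 3 * cos v = 2 * w^2 - 1" unfolding cos_treble_cos by simp
  have "cubicE \<psi> (Yf \<psi> t) = -8 * (4 * cos v ^ 3 - 3 * cos v) + 4 * \<psi>"
    by (simp add: cubicE_def Yf_def v_def power3_eq_cube algebra_simps)
  also have "\<dots> = 8 - 16 * w^2 + 4 * \<psi>" unfolding c3 by simp
  also have "\<dots> = 16 * (sf \<psi>)^2 * (cos t)^2"
    unfolding w_def power_mult_distrib sf_sq cos_squared_eq by (simp add: algebra_simps)
  finally show ?thesis .
qed

lemma dY: "(Yf \<psi> has_real_derivative Ydf \<psi> t) (at t)"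
proof -
  have da: "((\<lambda>t. arcsin (sf \<psi> * sin t)) has_real_derivative inverse (sqrt (1 - (sf \<psi> * sin t)^2)) * (sf \<psi> * cos t)) (at t)"
  proof -
    have h: "-1 < sf \<psi> * sin t" "sf \<psi> * sin t < 1" using w_bound[of t] by auto
    show ?thesis using DERIV_chain2[OF DERIV_arcsin[OF h] DERIV_cmult[OF DERIV_sin, of "sf \<psi>" t]] by simp
  qed
  define D where "D = inverse (sqrt (1 - (sf \<psi> * sin t)^2)) * (sf \<psi> * cos t)"
  have db: "((\<lambda>t. pi/3 + 2/3 * arcsin (sf \<psi> * sin t)) has_real_derivative 0 + 2/3 * D) (at t)"
    using DERIV_add[OF DERIV_const DERIV_cmult[OF da[folded D_def]]] .
  have "((\<lambda>t. cos (pi/3 + 2/3 * arcsin (sf \<psi> * sin t))) has_real_derivative - sin (pi/3 + 2/3 * arcsin (sf \<psi> * sin t)) * (0 + 2/3 * D)) (at t)"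
    using DERIV_chain2[OF DERIV_cos db] .
  from DERIV_cmult[OF this, of "-2"]
  have d: "((\<lambda>t. -2 * cos (pi/3 + 2/3 * arcsin (sf \<psi> * sin t))) has_real_derivative -2 * (- sin (pi/3 + 2/3 * arcsin (sf \<psi> * sin t)) * (0 + 2/3 * D))) (at t)" .
  have e1: "Yf \<psi> = (\<lambda>t. -2 * cos (pi/3 + 2/3 * arcsin (sf \<psi> * sin t)))"
    by (simp add: fun_eq_iff Yf_def betaf_def)
  have e2: "-2 * (- sin (pi/3 + 2/3 * arcsin (sf \<psi> * sin t)) * (0 + 2/3 * D)) = Ydf \<psi> t"
    unfolding Ydf_def D_def betaf_def by (simp add: inverse_eq_divide)
  show ?thesis using d unfolding e1 e2 .
qed

lemma fY: assumes "\<bar>t\<bar> < pi/2"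
  shows "2 / sqrt (cubicE \<psi> (Yf \<psi> t)) * Ydf \<psi> t = H1f \<psi> t"
proof -
  have ct: "cos t > 0" using assms by (intro cos_gt_zero_pi) auto
  have "sqrt (cubicE \<psi> (Yf \<psi> t)) = 4 * sf \<psi> * cos t"
    unfolding cubic_Y using ct sf_bounds
    by (simp add: real_sqrt_mult power_mult_distrib[symmetric])
  then show ?thesis using ct sf_bounds sqrt_w_pos[of t] unfolding Ydf_def H1f_def
    by (simp add: field_simps)
qed


lemma w_facts: "-1 \<le> sf \<psi> * sin t" "sf \<psi> * sin t \<le> 1" "(sf \<psi> * sin t)^2 \<noteq> 1"
proof -
  show "-1 \<le> sf \<psi> * sin t" "sf \<psi> * sin t \<le> 1" using w_bound[of t] by auto
  show "(sf \<psi> * sin t)^2 \<noteq> 1" using w_bound[of t] by (simp add: abs_square_eq_1)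
qed

lemma cont_H1: "continuous_on UNIV (H1f \<psi>)"
proof -
  have "continuous_on UNIV (\<lambda>t. 2/3 * sin (pi/3 + 2/3 * arcsin (sf \<psi> * sin t)) / sqrt (1 - (sf \<psi> * sin t)^2))"
    using w_facts by (intro continuous_intros) auto
  then show ?thesis unfolding H1f_def[abs_def] betaf_def .
qed

lemma cont_Yd: "continuous_on UNIV (Ydf \<psi>)"
proof -
  have "continuous_on UNIV (\<lambda>t. 2 * sin (pi/3 + 2/3 * arcsin (sf \<psi> * sin t)) * (2/3 * (sf \<psi> * cos t) / sqrt (1 - (sf \<psi> * sin t)^2)))"
    using w_facts by (intro continuous_intros) auto
  then show ?thesis unfolding Ydf_def[abs_def] betaf_def .
qed

lemma cont_Y: "continuous_on UNIV (Yf \<psi>)"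
  using dY by (metis DERIV_isCont continuous_at_imp_continuous_on)

lemma Yd_nonneg: assumes "-pi/2 \<le> t" "t \<le> pi/2" shows "0 \<le> Ydf \<psi> t"
proof -
  have "sin (pi/3 + betaf \<psi> t) > 0" using beta_bound[of t] by (intro sin_gt_zero) auto
  moreover have "cos t \<ge> 0" using assms by (intro cos_ge_zero) auto
  ultimately show ?thesis unfolding Ydf_def using sf_bounds sqrt_w_pos[of t] by simp
qed

lemma Y_ends: "Yf \<psi> (-pi/2) < Yf \<psi> (pi/2)"
proof -
  define g where "g = 2/3 * arcsin (sf \<psi>)"
  have ap: "arcsin (sf \<psi>) > 0" "arcsin (sf \<psi>) < pi/2"
    using arcsin_less_mono[of 0 "sf \<psi>"] arcsin_lt_bounded[of "sf \<psi>"] sf_bounds by auto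
  have b1: "betaf \<psi> (pi/2) = g" by (simp add: betaf_def g_def)
  have b2: "betaf \<psi> (-pi/2) = - g" using sf_bounds by (simp add: betaf_def g_def arcsin_minus)
  have "sin g > 0" using ap by (intro sin_gt_zero) (auto simp: g_def)
  moreover have "Yf \<psi> (pi/2) - Yf \<psi> (-pi/2) = 4 * sin (pi/3) * sin g"
    unfolding Yf_def b1 b2 by (simp add: cos_add cos_diff algebra_simps)
  moreover have "sin (pi/3) > 0" by (simp add: sin_60)
  ultimately show ?thesis by (smt (verit) mult_pos_pos)
qed


lemma subst_int:
  fixes h :: "real \<Rightarrow> real"
  assumes hc: "continuous_on UNIV h" and hnn: "\<And>t. 0 \<le> h (Yf \<psi> t)"
  shows "((\<lambda>x. h x * (2 / sqrt (cubicE \<psi> x))) has_integral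
           integral {-pi/2..pi/2} (\<lambda>t. h (Yf \<psi> t) * H1f \<psi> t)) {Yf \<psi> (-pi/2)..Yf \<psi> (pi/2)}"
proof -
  define f where "f x = h x * (2 / sqrt (cubicE \<psi> x))" for x
  define G where "G t = h (Yf \<psi> t) * H1f \<psi> t" for t
  have hC: "isCont h x" for x using hc by (simp add: continuous_on_eq_continuous_at)
  have YC: "isCont (Yf \<psi>) x" for x using cont_Y by (simp add: continuous_on_eq_continuous_at)
  have YdC: "isCont (Ydf \<psi>) x" for x using cont_Yd by (simp add: continuous_on_eq_continuous_at)
  have cubC: "isCont (cubicE \<psi>) x" for x unfolding cubicE_def[abs_def] by (intro continuous_intros)
  have contG: "continuous_on UNIV G" unfolding G_def
    using continuous_on_compose2[OF hc cont_Y] cont_H1 by (intro continuous_intros) auto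
  have eq: "f (Yf \<psi> t) * Ydf \<psi> t = G t" if "t \<in> {-pi/2<..<pi/2}" for t
  proof -
    have "\<bar>t\<bar> < pi/2" using that by auto
    then have e: "2 / sqrt (cubicE \<psi> (Yf \<psi> t)) * Ydf \<psi> t = H1f \<psi> t" by (rule fY)
    have "f (Yf \<psi> t) * Ydf \<psi> t = h (Yf \<psi> t) * (2 / sqrt (cubicE \<psi> (Yf \<psi> t)) * Ydf \<psi> t)"
      unfolding f_def by (simp only: mult.assoc)
    then show ?thesis unfolding e G_def .
  qed
  have Gint: "set_integrable lborel {-pi/2..pi/2} G"
    unfolding set_integrable_def
    by (rule borel_integrable_compact) (use contG in \<open>auto intro: continuous_on_subset\<close>)
  have Gint2: "set_integrable lborel {-pi/2<..<pi/2} G"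
    by (rule set_integrable_subset[OF Gint]) auto
  have fgint: "set_integrable lborel (einterval (ereal (-pi/2)) (ereal (pi/2))) (\<lambda>t. f (Yf \<psi> t) * Ydf \<psi> t)"
    using Gint2 by (subst set_integrable_cong[OF refl refl eq]) auto
  have limA: "((ereal \<circ> Yf \<psi> \<circ> real_of_ereal) \<longlongrightarrow> ereal (Yf \<psi> (-pi/2))) (at_right (ereal (-pi/2)))"
  proof -
    have "(Yf \<psi> \<longlongrightarrow> Yf \<psi> (-pi/2)) (at_right (-pi/2))"
      using YC[of "-pi/2"] unfolding isCont_def by (rule tendsto_mono[rotated]) (simp add: at_le)
    then show ?thesis unfolding o_assoc[symmetric] ereal_tendsto_simps1 ereal_tendsto_simps2 by (simp add: comp_def)
  qed
  have limB: "((ereal \<circ> Yf \<psi> \<circ> real_of_ereal) \<longlongrightarrow> ereal (Yf \<psi> (pi/2))) (at_left (ereal (pi/2)))"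
  proof -
    have "(Yf \<psi> \<longlongrightarrow> Yf \<psi> (pi/2)) (at_left (pi/2))"
      using YC[of "pi/2"] unfolding isCont_def by (rule tendsto_mono[rotated]) (simp add: at_le)
    then show ?thesis unfolding o_assoc[symmetric] ereal_tendsto_simps1 ereal_tendsto_simps2 by (simp add: comp_def)
  qed
  have p1: "ereal (-pi/2) < ereal (pi/2)" by simp
  have p2: "DERIV (Yf \<psi>) x :> Ydf \<psi> x" for x by (rule dY)
  have p3: "isCont f (Yf \<psi> x)" if "ereal (-pi/2) < ereal x" "ereal x < ereal (pi/2)" for x
  proof -
    have "\<bar>x\<bar> < pi/2" using that by auto
    then have "cos x > 0" by (intro cos_gt_zero_pi) auto
    then have "cubicE \<psi> (Yf \<psi> x) > 0" unfolding cubic_Y using sf_bounds by simp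
    then have "sqrt (cubicE \<psi> (Yf \<psi> x)) \<noteq> 0" by simp
    moreover have "isCont (\<lambda>y. sqrt (cubicE \<psi> y)) (Yf \<psi> x)" by (rule isCont_o2[OF cubC isCont_real_sqrt])
    ultimately show ?thesis unfolding f_def[abs_def] using hC by (intro isCont_mult isCont_divide) auto
  qed
  have p4: "isCont (Ydf \<psi>) x" for x by (rule YdC)
  have p5: "0 \<le> f (Yf \<psi> x)" for x unfolding f_def using hnn[of x] cubic_Y[of x] by (intro mult_nonneg_nonneg divide_nonneg_nonneg) auto
  have p6: "0 \<le> Ydf \<psi> x" if "ereal (-pi/2) \<le> ereal x" "ereal x \<le> ereal (pi/2)" for x
    using that by (intro Yd_nonneg) auto
  have p7: "set_integrable lborel (einterval (ereal (-pi/2)) (ereal (pi/2))) (\<lambda>t. f (Yf \<psi> t) * Ydf \<psi> t)"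
    by (rule fgint)
  note S = interval_integral_substitution_nonneg[where g'="Ydf \<psi>", OF p1 p2 p3 p4 p5 p6 limA limB p7]
  let ?a = "Yf \<psi> (-pi/2)" and ?b = "Yf \<psi> (pi/2)"
  have ab: "?a \<le> ?b" using Y_ends by simp
  have fi: "set_integrable lborel {?a<..<?b} f" using S(1) by simp
  note fI = set_borel_integral_eq_integral[OF fi]
  have Gi: "G integrable_on {-pi/2..pi/2}"
    by (rule integrable_continuous_real) (use contG in \<open>auto intro: continuous_on_subset\<close>)
  have GI: "integral {-pi/2<..<pi/2} G = integral {-pi/2..pi/2} G"
    using has_integral_Icc_iff_Ioo[of G "integral {-pi/2..pi/2} G" "-pi/2" "pi/2"] Gi
    by (metis has_integral_integrable_integral integral_unique)
  have "integral {?a<..<?b} f = (LINT x:{?a<..<?b}|lborel. f x)" using fI(2) by simp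
  also have "\<dots> = (LBINT x=ereal ?a..ereal ?b. f x)" using interval_integral_Ioo[of "ereal ?a" "ereal ?b" f] ab by simp
  also have "\<dots> = (LBINT t=ereal (-pi/2)..ereal (pi/2). f (Yf \<psi> t) * Ydf \<psi> t)" by (rule S(2))
  also have "\<dots> = (LINT t:{-pi/2<..<pi/2}|lborel. f (Yf \<psi> t) * Ydf \<psi> t)"
    using interval_integral_Ioo[of "ereal (-pi/2)" "ereal (pi/2)"] by simp
  also have "\<dots> = (LINT t:{-pi/2<..<pi/2}|lborel. G t)"
    by (rule set_lebesgue_integral_cong) (use eq in auto)
  also have "\<dots> = integral {-pi/2<..<pi/2} G" by (rule set_borel_integral_eq_integral(2)[OF Gint2])
  also have "\<dots> = integral {-pi/2..pi/2} G" by (rule GI)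
  finally have val: "integral {?a<..<?b} f = integral {-pi/2..pi/2} G" .
  have "(f has_integral integral {?a<..<?b} f) {?a<..<?b}" using fI(1) by (rule integrable_integral)
  then have "(f has_integral integral {-pi/2..pi/2} G) {?a..?b}" unfolding val has_integral_Icc_iff_Ioo .
  then show ?thesis unfolding f_def[abs_def] G_def[abs_def] .
qed


lemma g1: "\<And>X Y Q::real. 2/3*(sqrt 3/2*X + 1/2*Y)/Q = sqrt 3/3*(X/Q) + 1/3*(Y/Q)"
  by (simp add: add_divide_distrib ring_distribs)
lemma g2: "\<And>c X Y Q::real. -2 * c * (2/3 * X / Q) = - (4/3) * (c * X) / Q"
  by simp

lemma g3: "\<And>X Y Q::real. -(4/3)*(sqrt 3/4*X - 1/4*Y)/Q = -(sqrt 3/3)*(X/Q) + 1/3*(Y/Q)"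
  by (simp add: diff_divide_distrib ring_distribs)

lemma C_form: "H1f \<psi> t = sqrt 3 / 3 * (cos (2/3 * arcsin (sf \<psi> * sin t)) / sqrt (1 - (sf \<psi> * sin t)^2))
     + 1/3 * (sin (2/3 * arcsin (sf \<psi> * sin t)) / sqrt (1 - (sf \<psi> * sin t)^2))"
  unfolding H1f_def betaf_def sin_add sin_60 cos_60 by (rule g1)

lemma YC_form: "Yf \<psi> t * H1f \<psi> t = - (sqrt 3 / 3) * (cos (4/3 * arcsin (sf \<psi> * sin t)) / sqrt (1 - (sf \<psi> * sin t)^2))
     + 1/3 * (sin (4/3 * arcsin (sf \<psi> * sin t)) / sqrt (1 - (sf \<psi> * sin t)^2))"
proof -
  define b where "b = 2/3 * arcsin (sf \<psi> * sin t)"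
  have b2: "4/3 * arcsin (sf \<psi> * sin t) = 2 * b" by (simp add: b_def)
  have s3: "sqrt 3 * sqrt 3 = (3::real)" by simp
  have "cos (pi/3 + b) * sin (pi/3 + b) = sqrt 3 / 4 * cos (2 * b) - 1/4 * sin (2 * b)"
    unfolding sin_add cos_add sin_60 cos_60 cos_double sin_double
    by (simp add: algebra_simps power2_eq_square s3)
  then have pr: "cos (pi/3 + b) * sin (pi/3 + b) = sqrt 3 / 4 * cos (4/3 * arcsin (sf \<psi> * sin t)) - 1/4 * sin (4/3 * arcsin (sf \<psi> * sin t))"
    unfolding b2 .
  have "Yf \<psi> t * H1f \<psi> t = - (4/3) * (cos (pi/3 + b) * sin (pi/3 + b)) / sqrt (1 - (sf \<psi> * sin t)^2)"
    unfolding Yf_def H1f_def betaf_def b_def[symmetric] by (rule g2)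
  also have "\<dots> = - (4/3) * (sqrt 3 / 4 * cos (4/3 * arcsin (sf \<psi> * sin t)) - 1/4 * sin (4/3 * arcsin (sf \<psi> * sin t))) / sqrt (1 - (sf \<psi> * sin t)^2)"
    unfolding pr ..
  also have "\<dots> = - (sqrt 3 / 3) * (cos (4/3 * arcsin (sf \<psi> * sin t)) / sqrt (1 - (sf \<psi> * sin t)^2))
     + 1/3 * (sin (4/3 * arcsin (sf \<psi> * sin t)) / sqrt (1 - (sf \<psi> * sin t)^2))" by (rule g3)
  finally show ?thesis .
qed

end

lemma odd_int: fixes f :: "real \<Rightarrow> real"
  assumes "continuous_on {-c..c} f" "\<And>t. f (-t) = - f t"
  shows "(f has_integral 0) {-c..c}"
proof -
  define I where "I = integral {-c..c} f"
  have i: "(f has_integral I) {-c..c}" unfolding I_def using assms(1) by (intro integrable_integral integrable_continuous_real)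
  have "((\<lambda>x. f (-x)) has_integral I) {-c..- (-c)}"
    using has_integral_reflect_real[where f=f and i=I and a="-c" and b=c] i by simp
  moreover have "(\<lambda>x. f (-x)) = (\<lambda>x. - f x)" using assms(2) by (simp add: fun_eq_iff)
  ultimately have "((\<lambda>x. - f x) has_integral I) {-c..c}" by simp
  then have "((\<lambda>x. - (- f x)) has_integral - I) {-c..c}" by (rule has_integral_neg)
  then have "(f has_integral - I) {-c..c}" by simp
  then have "I = - I" using i has_integral_unique by blast
  then show ?thesis using i by simp
qed


lemma sqrt3_3: "sqrt 3 / 3 = 1 / sqrt (3::real)"
proof -
  have n: "sqrt (3::real) \<noteq> 0" by simp
  have "sqrt 3 / 3 = sqrt 3 / (sqrt 3 * sqrt (3::real))" by simp
  also have "\<dots> = 1 / sqrt 3" using n by (simp only: divide_divide_eq_left[symmetric] divide_self_if) simp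
  finally show ?thesis .
qed

context
  fixes \<psi> :: real
  assumes psi: "-2 < \<psi>" "\<psi> < 2"
begin

lemma theta_sf: assumes "a^2 \<le> 3" "a \<noteq> 0"
  shows "((\<lambda>t. cos (a * arcsin (sf \<psi> * sin t)) / sqrt (1 - (sf \<psi> * sin t)^2)) has_integral
           (pi * hyperF ((1-a)/2) ((1+a)/2) 1 ((\<psi> + 2) / 4))) {-pi/2..pi/2}"
  using theta_int[OF assms, of "(\<psi> + 2) / 4"] psi unfolding sf_def by simp

lemma odd_sf: "((\<lambda>t. sin (c * arcsin (sf \<psi> * sin t)) / sqrt (1 - (sf \<psi> * sin t)^2)) has_integral 0) {-pi/2..pi/2}"
proof -
  have "((\<lambda>t. sin (c * arcsin (sf \<psi> * sin t)) / sqrt (1 - (sf \<psi> * sin t)^2)) has_integral 0) {-(pi/2)..pi/2}"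
  proof (rule odd_int)
    show "continuous_on {-(pi/2)..pi/2} (\<lambda>t. sin (c * arcsin (sf \<psi> * sin t)) / sqrt (1 - (sf \<psi> * sin t)^2))"
      using w_facts[OF psi] by (intro continuous_intros) auto
    fix t
    have "arcsin (sf \<psi> * sin (-t)) = - arcsin (sf \<psi> * sin t)"
      using w_facts[OF psi, of t] by (simp add: arcsin_minus)
    then show "sin (c * arcsin (sf \<psi> * sin (-t))) / sqrt (1 - (sf \<psi> * sin (-t))^2) =
       - (sin (c * arcsin (sf \<psi> * sin t)) / sqrt (1 - (sf \<psi> * sin t)^2))"
      by simp
  qed
  then show ?thesis by simp
qed

lemma T1: "(H1f \<psi> has_integral (pi / sqrt 3 * hyperF (1/6) (5/6) 1 ((\<psi> + 2) / 4))) {-pi/2..pi/2}"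
proof -
  have e: "(1 - (2/3::real))/2 = 1/6" "(1 + (2/3::real))/2 = 5/6" by simp_all
  have A: "((\<lambda>t. cos (2/3 * arcsin (sf \<psi> * sin t)) / sqrt (1 - (sf \<psi> * sin t)^2)) has_integral
           (pi * hyperF (1/6) (5/6) 1 ((\<psi> + 2) / 4))) {-pi/2..pi/2}"
    using theta_sf[of "2/3"] unfolding e by (simp add: power2_eq_square)
  have "((\<lambda>t. sqrt 3 / 3 * (cos (2/3 * arcsin (sf \<psi> * sin t)) / sqrt (1 - (sf \<psi> * sin t)^2))
     + 1/3 * (sin (2/3 * arcsin (sf \<psi> * sin t)) / sqrt (1 - (sf \<psi> * sin t)^2))) has_integral
      (sqrt 3 / 3 * (pi * hyperF (1/6) (5/6) 1 ((\<psi> + 2) / 4)) + 1/3 * 0)) {-pi/2..pi/2}"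
    by (intro has_integral_add has_integral_mult_right A odd_sf)
  moreover have "H1f \<psi> = (\<lambda>t. sqrt 3 / 3 * (cos (2/3 * arcsin (sf \<psi> * sin t)) / sqrt (1 - (sf \<psi> * sin t)^2))
     + 1/3 * (sin (2/3 * arcsin (sf \<psi> * sin t)) / sqrt (1 - (sf \<psi> * sin t)^2)))"
    using C_form[OF psi] by (simp add: fun_eq_iff)
  ultimately show ?thesis unfolding sqrt3_3 by simp
qed

lemma T2: "((\<lambda>t. Yf \<psi> t * H1f \<psi> t) has_integral (- (pi / sqrt 3) * hyperF (-1/6) (7/6) 1 ((\<psi> + 2) / 4))) {-pi/2..pi/2}"
proof -
  have e: "(1 - (4/3::real))/2 = -1/6" "(1 + (4/3::real))/2 = 7/6" by simp_all
  have A: "((\<lambda>t. cos (4/3 * arcsin (sf \<psi> * sin t)) / sqrt (1 - (sf \<psi> * sin t)^2)) has_integral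
           (pi * hyperF (-1/6) (7/6) 1 ((\<psi> + 2) / 4))) {-pi/2..pi/2}"
    using theta_sf[of "4/3"] unfolding e by (simp add: power2_eq_square)
  have "((\<lambda>t. - (sqrt 3 / 3) * (cos (4/3 * arcsin (sf \<psi> * sin t)) / sqrt (1 - (sf \<psi> * sin t)^2))
     + 1/3 * (sin (4/3 * arcsin (sf \<psi> * sin t)) / sqrt (1 - (sf \<psi> * sin t)^2))) has_integral
      (- (sqrt 3 / 3) * (pi * hyperF (-1/6) (7/6) 1 ((\<psi> + 2) / 4)) + 1/3 * 0)) {-pi/2..pi/2}"
    by (intro has_integral_add has_integral_mult_right A odd_sf)
  moreover have "(\<lambda>t. Yf \<psi> t * H1f \<psi> t) = (\<lambda>t. - (sqrt 3 / 3) * (cos (4/3 * arcsin (sf \<psi> * sin t)) / sqrt (1 - (sf \<psi> * sin t)^2))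
     + 1/3 * (sin (4/3 * arcsin (sf \<psi> * sin t)) / sqrt (1 - (sf \<psi> * sin t)^2)))"
    using YC_form[OF psi] by (simp add: fun_eq_iff)
  ultimately show ?thesis unfolding sqrt3_3 by simp
qed

end



theorem mainTheorem12:
  fixes \<psi> e1 e2 :: real
  assumes "-2 < \<psi>" and "\<psi> < 2"
    and "e1 < e2" and "cubicE \<psi> e1 = 0" and "cubicE \<psi> e2 = 0"
    and "\<forall>x\<in>{e1<..<e2}. cubicE \<psi> x > 0"
  shows "((\<lambda>x. 2 / sqrt (cubicE \<psi> x)) has_integral
            (pi / sqrt 3 * hyperF (1/6) (5/6) 1 ((\<psi> + 2) / 4))) {e1..e2}
       \<and> ((\<lambda>x. 2 * x / sqrt (cubicE \<psi> x)) has_integral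
            (- (pi / sqrt 3) * hyperF (-1/6) (7/6) 1 ((\<psi> + 2) / 4))) {e1..e2}"
proof -
  note psi = assms(1,2)
  define r1 where "r1 = Yf \<psi> (-pi/2)"
  define r2 where "r2 = Yf \<psi> (pi/2)"
  define r3 where "r3 = -(r1 + r2)"
  have r12: "r1 < r2" unfolding r1_def r2_def by (rule Y_ends[OF psi])
  have c1: "cubicE \<psi> r1 = 0" unfolding r1_def cubic_Y[OF psi] by simp
  have c2: "cubicE \<psi> r2 = 0" unfolding r2_def cubic_Y[OF psi] by simp
  have fac: "cubicE \<psi> x = 4 * (x - r1) * (x - r2) * (x - r3)" for x
  proof -
    define A where "A = -12 - 4 * (r1 * r2 - (r1 + r2)^2)"
    define B where "B = 4 * \<psi> - 4 * (r1 * r2) * (r1 + r2)"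
    have lin: "cubicE \<psi> y - 4 * (y - r1) * (y - r2) * (y - r3) = A * y + B" for y
      unfolding cubicE_def A_def B_def r3_def by (simp add: algebra_simps power2_eq_square power3_eq_cube)
    have a1: "A * r1 + B = 0" using lin[of r1] c1 by simp
    have a2: "A * r2 + B = 0" using lin[of r2] c2 by simp
    have "A * (r2 - r1) = (A * r2 + B) - (A * r1 + B)" by (simp add: algebra_simps)
    then have "A * (r2 - r1) = 0" unfolding a1 a2 by simp
    then have "A = 0" using r12 by simp
    then have "B = 0" using \<open>A * r1 + B = 0\<close> by simp
    then show ?thesis using lin[of x] \<open>A = 0\<close> by simp
  qed
  have r23: "r2 < r3"
  proof -
    define g where "g = 2/3 * arcsin (sf \<psi>)"
    have ap: "arcsin (sf \<psi>) > 0" "arcsin (sf \<psi>) < pi/2"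
      using arcsin_less_mono[of 0 "sf \<psi>"] arcsin_lt_bounded[of "sf \<psi>"] sf_bounds[OF psi] by auto
    have b1: "betaf \<psi> (pi/2) = g" by (simp add: betaf_def g_def)
    have b2: "betaf \<psi> (-pi/2) = - g" using sf_bounds[OF psi] by (simp add: betaf_def g_def arcsin_minus)
    have "sin (pi/3 - g) > 0" using ap by (intro sin_gt_zero) (auto simp: g_def)
    then have p: "sqrt 3 / 2 * cos g - 1/2 * sin g > 0" unfolding sin_diff sin_60 cos_60 .
    have s3: "sqrt 3 * sqrt 3 = (3::real)" by simp
    have "r3 - r2 = 2 * sqrt 3 * (sqrt 3 / 2 * cos g - 1/2 * sin g)"
      unfolding r3_def r1_def r2_def Yf_def b1 b2 cos_add cos_diff sin_60 cos_60
      by (simp add: algebra_simps s3)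
    moreover have "0 < 2 * sqrt 3 * (sqrt 3 / 2 * cos g - 1/2 * sin g)" using p by (intro mult_pos_pos) auto
    ultimately show ?thesis by linarith
  qed
  have roots: "e = r1 \<or> e = r2 \<or> e = r3" if "cubicE \<psi> e = 0" for e
    using that unfolding fac by simp
  have pos: "\<And>x. e1 < x \<Longrightarrow> x < e2 \<Longrightarrow> cubicE \<psi> x > 0" using assms(6) by auto
  have e1: "e1 = r1" and e2: "e2 = r2"
  proof -
    have "e1 = r1 \<and> e2 = r2"
    proof (cases "e1 = r1")
      case True
      have "e2 = r2 \<or> e2 = r3" using roots[OF assms(5)] True assms(3) by auto
      moreover have "e2 \<noteq> r3"
      proof
        assume "e2 = r3"
        then have "cubicE \<psi> r2 > 0" using pos[of r2] True r12 r23 by auto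
        then show False using c2 by simp
      qed
      ultimately show ?thesis using True by auto
    next
      case False
      then have "e1 = r2 \<or> e1 = r3" using roots[OF assms(4)] by auto
      then show ?thesis
      proof
        assume h: "e1 = r2"
        then have "e2 = r3" using roots[OF assms(5)] assms(3) r12 by auto
        define m where "m = (r2 + r3) / 2"
        have "cubicE \<psi> m > 0" using pos[of m] h \<open>e2 = r3\<close> r23 by (auto simp: m_def)
        moreover have "cubicE \<psi> m < 0"
        proof -
          have "(m - r1) * (m - r2) > 0" using r12 r23 by (auto simp: m_def)
          moreover have "m - r3 < 0" using r23 by (simp add: m_def)
          ultimately have "(m - r1) * (m - r2) * (m - r3) < 0" by (simp add: mult_pos_neg)
          then have "4 * ((m - r1) * (m - r2) * (m - r3)) < 0" by simp
          then show ?thesis unfolding fac by (simp only: mult.assoc)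
        qed
        ultimately show ?thesis by simp
      next
        assume "e1 = r3"
        then show ?thesis using roots[OF assms(5)] assms(3) r12 r23 by auto
      qed
    qed
    then show "e1 = r1" "e2 = r2" by auto
  qed
  have I1: "((\<lambda>x. 1 * (2 / sqrt (cubicE \<psi> x))) has_integral integral {-pi/2..pi/2} (\<lambda>t. 1 * H1f \<psi> t)) {r1..r2}"
    unfolding r1_def r2_def by (rule subst_int[OF psi]) auto
  have V1: "integral {-pi/2..pi/2} (\<lambda>t. 1 * H1f \<psi> t) = pi / sqrt 3 * hyperF (1/6) (5/6) 1 ((\<psi> + 2) / 4)"
    using T1[OF psi] by (simp add: integral_unique)
  have Yge: "Yf \<psi> t \<ge> -2" for t unfolding Yf_def by simp
  have I2: "((\<lambda>x. (x + 3) * (2 / sqrt (cubicE \<psi> x))) has_integral integral {-pi/2..pi/2} (\<lambda>t. (Yf \<psi> t + 3) * H1f \<psi> t)) {r1..r2}"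
    unfolding r1_def r2_def
  proof (rule subst_int[OF psi])
    show "continuous_on UNIV (\<lambda>x::real. x + 3)" by (intro continuous_intros)
    show "0 \<le> Yf \<psi> t + 3" for t using Yge[of t] by linarith
  qed
  have V2: "integral {-pi/2..pi/2} (\<lambda>t. (Yf \<psi> t + 3) * H1f \<psi> t) =
      - (pi / sqrt 3) * hyperF (-1/6) (7/6) 1 ((\<psi> + 2) / 4) + 3 * (pi / sqrt 3 * hyperF (1/6) (5/6) 1 ((\<psi> + 2) / 4))"
  proof -
    have "((\<lambda>t. Yf \<psi> t * H1f \<psi> t + 3 * H1f \<psi> t) has_integral
      (- (pi / sqrt 3) * hyperF (-1/6) (7/6) 1 ((\<psi> + 2) / 4) + 3 * (pi / sqrt 3 * hyperF (1/6) (5/6) 1 ((\<psi> + 2) / 4)))) {-pi/2..pi/2}"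
      by (intro has_integral_add has_integral_mult_right T1[OF psi] T2[OF psi])
    then show ?thesis by (simp add: integral_unique algebra_simps)
  qed
  have A1: "((\<lambda>x. 2 / sqrt (cubicE \<psi> x)) has_integral (pi / sqrt 3 * hyperF (1/6) (5/6) 1 ((\<psi> + 2) / 4))) {e1..e2}"
    using I1 unfolding V1 e1 e2 by simp
  have "((\<lambda>x. (x + 3) * (2 / sqrt (cubicE \<psi> x)) - 3 * (2 / sqrt (cubicE \<psi> x))) has_integral
      ((- (pi / sqrt 3) * hyperF (-1/6) (7/6) 1 ((\<psi> + 2) / 4) + 3 * (pi / sqrt 3 * hyperF (1/6) (5/6) 1 ((\<psi> + 2) / 4)))
       - 3 * (pi / sqrt 3 * hyperF (1/6) (5/6) 1 ((\<psi> + 2) / 4)))) {e1..e2}"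
    using I2 A1 unfolding V2 e1 e2 by (intro has_integral_diff has_integral_mult_right) auto
  moreover have "(\<lambda>x. (x + 3) * (2 / sqrt (cubicE \<psi> x)) - 3 * (2 / sqrt (cubicE \<psi> x))) = (\<lambda>x. 2 * x / sqrt (cubicE \<psi> x))"
    by (simp add: fun_eq_iff algebra_simps add_divide_distrib)
  ultimately have A2: "((\<lambda>x. 2 * x / sqrt (cubicE \<psi> x)) has_integral (- (pi / sqrt 3) * hyperF (-1/6) (7/6) 1 ((\<psi> + 2) / 4))) {e1..e2}"
    by simp
  show ?thesis using A1 A2 by blast
qed

end
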